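(* Let $I_n=[0,1]^n$ and let $C(I_n)$ denote the space of continuous real-valued functions on $I_n$. Interpretable Continuous Control Trees (ICCTs), as defined in the context, are dense in $C(I_n)$ with respect to the supremum norm. That is, for every $f\in C(I_n)$ and every $\epsilon>0$ there exists an ICCT $I:\mathbb{R}^n\to\mathbb{R}$ such that $|I(x)-f(x)|<\epsilon$ for all $x\in I_n$.
   Context: An Interpretable Continuous Control Tree (ICCT) with input $x=(x^1,\dots,x^n)\in\mathbb{R}^n$ and scalar output is a binary tree of arbitrary (finite) depth in which every internal (decision) node $i$ carries a coordinate index $k_i\in\{1,\dots,n\}$, a nonzero weight $w_i\in\mathbb{R}$, a threshold $b_i\in\mathbb{R}$ and a steepness $\alpha\neq 0$, and evaluates the crisp (Boolean) test $\mathbbm{1}(\alpha(w_i x^{k_i}-b_i)>0)$; the input is routed to the left child if the test is true and to the right child otherwise, starting from the root, until a leaf is reached. Each leaf $d$ carries an affine controller $l_d(x)=(\vec u_d\circ\vec\beta_d)^T(\vec u_d\circ x)+\vec u_d^T\vec\phi_d$, where $\vec\beta_d,\vec\phi_d\in\mathbb{R}^n$ and $\vec u_d\in\{0,1\}^n$ is a selection vector of active features (the case $\vec u_d=0$ with a constant output, i.e. a static leaf value, is allowed). The output $I(x)$ is the value $l_d(x)$ of the leaf $d$ reached by $x$. Equivalently, $I(x)=\sum_{d} l_d(x)\prod_{\text{nodes on path to }d}(\text{indicator or its complement})$, a sum over leaves of the leaf value times the product of the hard decision outcomes along the path. *)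

theory Defs
  imports "HOL-Analysis.Analysis"
begin

text \<open>Interpretable Continuous Control Trees (ICCTs) with crisp (Boolean) decision nodes.
  Inputs live in real ^ 'n (n = CARD('n)); coordinates are indexed by the type 'n.\<close>

datatype ('n::finite) icct =
    AffLeaf "real ^ 'n" "real ^ 'n" "bool ^ 'n"
      \<comment> \<open>beta, phi, selection vector u\<close>
  | ConstLeaf real
      \<comment> \<open>static leaf value (the case u = 0 with a constant output)\<close>
  | Node 'n real real "'n icct" "'n icct"
      \<comment> \<open>coordinate index k, weight w, threshold b, left, right\<close>

definition sel :: "bool \<Rightarrow> real" where "sel p = (if p then 1 else 0)"

definition leaf_ctrl :: "real ^ 'n \<Rightarrow> real ^ 'n \<Rightarrow> bool ^ 'n \<Rightarrow> real ^ 'n \<Rightarrow> real" where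
  "leaf_ctrl beta phi u x =
     (\<Sum>i\<in>UNIV. (sel (u $ i) * beta $ i) * (sel (u $ i) * x $ i)) + (\<Sum>i\<in>UNIV. sel (u $ i) * phi $ i)"

fun icct_eval :: "real \<Rightarrow> 'n::finite icct \<Rightarrow> real ^ 'n \<Rightarrow> real" where
  "icct_eval \<alpha> (AffLeaf beta phi u) x = leaf_ctrl beta phi u x"
| "icct_eval \<alpha> (ConstLeaf c) x = c"
| "icct_eval \<alpha> (Node k w b l r) x =
     (if \<alpha> * (w * x $ k - b) > 0 then icct_eval \<alpha> l x else icct_eval \<alpha> r x)"

fun icct_wf :: "'n::finite icct \<Rightarrow> bool" where
  "icct_wf (AffLeaf _ _ _) = True"
| "icct_wf (ConstLeaf _) = True"
| "icct_wf (Node k w b l r) = (w \<noteq> 0 \<and> icct_wf l \<and> icct_wf r)"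

definition unit_cube :: "(real ^ 'n) set" where
  "unit_cube = {x. \<forall>i. 0 \<le> x $ i \<and> x $ i \<le> 1}"

end

theory Submission
  imports Defs
begin

fun sel_tree :: "'n::finite \<Rightarrow> nat \<Rightarrow> nat \<Rightarrow> (nat \<Rightarrow> 'n icct) \<Rightarrow> 'n icct" where
  "sel_tree k N 0 g = g 0"
| "sel_tree k N (Suc m) g = Node k 1 (real (Suc m) / real N) (g (Suc m)) (sel_tree k N m g)"

lemma sel_tree_wf: "(\<And>j. icct_wf (g j)) \<Longrightarrow> icct_wf (sel_tree k N m g)"
  by (induction m) auto

lemma sel_tree_eval:
  "\<exists>j\<le>m. icct_eval 1 (sel_tree k N m g) x = icct_eval 1 (g j) x \<and>
     (j = 0 \<or> real j / real N < x $ k) \<and> (j = m \<or> x $ k \<le> real (Suc j) / real N)"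
proof (induction m)
  case 0
  then show ?case by auto
next
  case (Suc m)
  show ?case
  proof (cases "real (Suc m) / real N < x $ k")
    case True
    then show ?thesis by (intro exI[of _ "Suc m"]) auto
  next
    case False
    from Suc obtain j where j: "j \<le> m" "icct_eval 1 (sel_tree k N m g) x = icct_eval 1 (g j) x"
      "j = 0 \<or> real j / real N < x $ k" "j = m \<or> x $ k \<le> real (Suc j) / real N" by blast
    have "x $ k \<le> real (Suc j) / real N" using j(4) False by auto
    then show ?thesis using False j by (intro exI[of _ j]) auto
  qed
qed

definition pt :: "nat \<Rightarrow> ('n::finite \<Rightarrow> nat) \<Rightarrow> real ^ 'n" where
  "pt N c = (\<chi> i. real (c i) / real N)"

fun build :: "(real ^ 'n \<Rightarrow> real) \<Rightarrow> nat \<Rightarrow> 'n::finite list \<Rightarrow> ('n \<Rightarrow> nat) \<Rightarrow> 'n icct" where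
  "build f N [] c = ConstLeaf (f (pt N c))"
| "build f N (k # ks) c = sel_tree k N (N - 1) (\<lambda>j. build f N ks (c(k := j)))"

lemma build_wf: "icct_wf (build f N ks c)"
  by (induction ks arbitrary: c) (auto intro: sel_tree_wf)

lemma build_eval:
  assumes N: "N > 0" and x: "x \<in> unit_cube"
  shows "\<exists>c'. icct_eval 1 (build f N ks c) x = f (pt N c') \<and>
     (\<forall>k\<in>set ks. c' k \<le> N - 1 \<and> \<bar>x $ k - real (c' k) / real N\<bar> \<le> 1 / real N) \<and>
     (\<forall>i. i \<notin> set ks \<longrightarrow> c' i = c i)"
proof (induction ks arbitrary: c)
  case Nil
  then show ?case by auto
next
  case (Cons k ks)
  obtain j where j: "j \<le> N - 1" "icct_eval 1 (build f N (k#ks) c) x = icct_eval 1 (build f N ks (c(k := j))) x"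
    "j = 0 \<or> real j / real N < x $ k" "j = N - 1 \<or> x $ k \<le> real (Suc j) / real N"
    using sel_tree_eval[of "N - 1" k N "\<lambda>j. build f N ks (c(k := j))" x] by auto
  obtain c' where c': "icct_eval 1 (build f N ks (c(k := j))) x = f (pt N c')"
    "\<forall>k\<in>set ks. c' k \<le> N - 1 \<and> \<bar>x $ k - real (c' k) / real N\<bar> \<le> 1 / real N"
    "\<forall>i. i \<notin> set ks \<longrightarrow> c' i = (c(k := j)) i"
    using Cons[of "c(k := j)"] by blast
  have xk: "0 \<le> x $ k" "x $ k \<le> 1" using x by (auto simp: unit_cube_def)
  have cl: "\<bar>x $ k - real j / real N\<bar> \<le> 1 / real N"
  proof -
    have a: "real j / real N \<le> x $ k + 1 / real N"
    proof (cases "j = 0")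
      case True then show ?thesis using xk N by simp
    next
      case False then show ?thesis using j(3) N by (smt (verit) divide_nonneg_nonneg of_nat_0_le_iff)
    qed
    have b: "x $ k \<le> real j / real N + 1 / real N"
    proof (cases "j = N - 1")
      case True
      then have "real j / real N + 1 / real N = 1" using N by (simp add: field_simps of_nat_diff)
      then show ?thesis using xk by simp
    next
      case False
      then show ?thesis using j(4) by (simp add: add_divide_distrib)
    qed
    show ?thesis using a b by linarith
  qed
  show ?case
  proof (intro exI[of _ c'] conjI)
    show "icct_eval 1 (build f N (k # ks) c) x = f (pt N c')" using j(2) c'(1) by simp
    show "\<forall>i. i \<notin> set (k # ks) \<longrightarrow> c' i = c i" using c'(3) by auto
    show "\<forall>k'\<in>set (k # ks). c' k' \<le> N - 1 \<and> \<bar>x $ k' - real (c' k') / real N\<bar> \<le> 1 / real N"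
      using c'(2,3) j(1) cl by (cases "k \<in> set ks") auto
  qed
qed

theorem theorem1:
  fixes f :: "real ^ 'n::finite \<Rightarrow> real" and \<epsilon> :: real
  assumes "continuous_on unit_cube f" and "\<epsilon> > 0"
  shows "\<exists>(\<alpha>::real) (T :: 'n icct). \<alpha> \<noteq> 0 \<and> icct_wf T \<and> (\<forall>x\<in>unit_cube. \<bar>icct_eval \<alpha> T x - f x\<bar> < \<epsilon>)"
proof -
  have cube: "unit_cube = cbox (0::real^'n) 1"
    by (auto simp: unit_cube_def mem_box_cart)
  have compact_cube: "compact (unit_cube :: (real^'n) set)" unfolding cube by (rule compact_cbox)
  have "uniformly_continuous_on unit_cube f"
    using assms(1) compact_uniformly_continuous compact_cube by blast
  then obtain d where d: "d > 0" "\<And>x y. x \<in> unit_cube \<Longrightarrow> y \<in> unit_cube \<Longrightarrow> dist y x < d \<Longrightarrow> dist (f y) (f x) < \<epsilon>"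
    unfolding uniformly_continuous_on_def using assms(2) by metis
  obtain N :: nat where N0: "real CARD('n) / d < real N" using reals_Archimedean2 by blast
  have Npos: "N > 0" 
  proof (rule ccontr)
    assume "\<not> N > 0"
    then have "N = 0" by simp
    with N0 have "real CARD('n) / d < 0" by simp
    moreover have "real CARD('n) / d \<ge> 0" using d(1) by simp
    ultimately show False by linarith
  qed
  have Nd1: "real CARD('n) < real N * d" using N0 d(1) by (simp add: pos_divide_less_eq)
  have NR: "0 < real N" using Npos by simp
  have Nd: "real CARD('n) / real N < d" unfolding pos_divide_less_eq[OF NR] using Nd1 by (simp only: mult.commute)
  obtain ks :: "'n list" where ks: "set ks = UNIV" using finite_list[of "UNIV::'n set", OF finite_class.finite_UNIV] by blast
  show ?thesis
  proof (intro exI[of _ "1::real"] exI[of _ "build f N ks (\<lambda>_. 0)"] conjI ballI)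
    show "(1::real) \<noteq> 0" by simp
    show "icct_wf (build f N ks (\<lambda>_. 0))" by (rule build_wf)
    fix x :: "real^'n" assume x: "x \<in> unit_cube"
    obtain c' where c': "icct_eval 1 (build f N ks (\<lambda>_. 0)) x = f (pt N c')"
      "\<forall>k. c' k \<le> N - 1 \<and> \<bar>x $ k - real (c' k) / real N\<bar> \<le> 1 / real N"
      using build_eval[OF Npos x, of f ks "\<lambda>_. 0"] ks by auto
    have pin: "pt N c' \<in> unit_cube"
    proof -
      have "real (c' k) / real N \<le> 1" for k
      proof -
        have "c' k \<le> N" using c'(2)[rule_format, of k] by linarith
        then show ?thesis using Npos by (simp add: divide_le_eq_1)
      qed
      then show ?thesis by (auto simp: unit_cube_def pt_def)
    qed
    have "dist (pt N c') x \<le> (\<Sum>i\<in>UNIV. \<bar>(pt N c' - x) $ i\<bar>)"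
      unfolding dist_norm by (rule norm_le_l1_cart)
    also have "\<dots> \<le> (\<Sum>i\<in>(UNIV::'n set). 1 / real N)"
      proof (rule sum_mono)
      fix i :: 'n
      have "(pt N c' - x) $ i = real (c' i) / real N - x $ i" by (simp add: pt_def)
      then show "\<bar>(pt N c' - x) $ i\<bar> \<le> 1 / real N" using c'(2)[rule_format, of i] by linarith
    qed
    also have "\<dots> = real CARD('n) / real N" by simp
    finally have "dist (pt N c') x < d" using Nd by linarith
    then have "dist (f (pt N c')) (f x) < \<epsilon>" using d(2)[OF x pin] by blast
    then show "\<bar>icct_eval 1 (build f N ks (\<lambda>_. 0)) x - f x\<bar> < \<epsilon>"
      using c'(1) by (simp add: dist_real_def)
  qed
qed

end
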